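(* For every feasible basis $B$ of a system $Ax=b$, $x\in\mathbb{R}^d_{\geq 0}$ that satisfies the dominance condition, the submatrix $\hat A_B$ (columns of the normalized matrix $\hat A$ indexed by $B$) covers a permutation matrix.
   Context: $A\in\mathbb{R}^{n\times d}_{\geq 0}$ has a nonzero entry in each column and $b>0$. A feasible basis is $B\subset[d]$ with $A_B$ square nonsingular and the unique solution of $Ax=b$ supported in $B$ nonnegative. The normalized matrix is $\hat A=(\operatorname{diag} b)^{-1}A(\operatorname{diag} u)^{-1}$, where $u_j$ is the largest entry of the $j$th column of $(\operatorname{diag} b)^{-1}A$; it has entries in $[0,1]$ and a $1$-entry in each column. A matrix covers another if their difference is entrywise nonnegative. The system satisfies the dominance condition if $\hat A$ satisfies (a) some $n\times n$ submatrix covers a permutation matrix, and (b) every $n\times n$ submatrix covering a permutation matrix has all row sums less than $2$. *)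

theory Defs
  imports "HOL-Analysis.Analysis"
begin

text \<open>Rows of A are indexed by the finite type 'n (n = CARD('n)),
columns by the finite type 'd (d = CARD('d)).\<close>

definition col_scale :: "real^'d^'n \<Rightarrow> real^'n \<Rightarrow> 'd \<Rightarrow> real" where
  "col_scale A b j = Max (range (\<lambda>i. A $ i $ j / b $ i))"

definition normalized :: "real^'d^'n \<Rightarrow> real^'n \<Rightarrow> real^'d^'n" where
  "normalized A b = (\<chi> i j. A $ i $ j / b $ i / col_scale A b j)"

definition covers_perm :: "real^'d^'n \<Rightarrow> 'd set \<Rightarrow> bool" where
  "covers_perm M S \<longleftrightarrow> (\<exists>p. bij_betw p (UNIV :: 'n set) S \<and>
     (\<forall>i. \<forall>j\<in>S. (if j = p i then 1 else 0) \<le> M $ i $ j))"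

definition dominance :: "real^'d^'n \<Rightarrow> real^'n \<Rightarrow> bool" where
  "dominance A b \<longleftrightarrow>
     (\<exists>S. card S = CARD('n) \<and> covers_perm (normalized A b) S) \<and>
     (\<forall>S. card S = CARD('n) \<and> covers_perm (normalized A b) S \<longrightarrow>
          (\<forall>i. (\<Sum>j\<in>S. normalized A b $ i $ j) < 2))"

definition feasible_basis :: "real^'d^'n \<Rightarrow> real^'n \<Rightarrow> 'd set \<Rightarrow> bool" where
  "feasible_basis A b B \<longleftrightarrow>
     card B = CARD('n) \<and>
     (\<exists>e :: 'n \<Rightarrow> 'd. bij_betw e UNIV B \<and> invertible (\<chi> i k. A $ i $ (e k))) \<and>
     (\<forall>x :: real^'d. (\<forall>j. j \<notin> B \<longrightarrow> x $ j = 0) \<and> A *v x = b \<longrightarrow> (\<forall>j. 0 \<le> x $ j))"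

end

theory Submission
  imports Defs
begin

lemma norm_props:
  fixes A :: "real^'d^'n" and b :: "real^'n"
  assumes nonneg: "\<forall>i j. 0 \<le> A $ i $ j"
    and col_nonzero: "\<forall>j. \<exists>i. A $ i $ j \<noteq> 0"
    and b_pos: "\<forall>i. 0 < b $ i"
  shows "0 < col_scale A b j" "0 \<le> normalized A b $ i $ j" "normalized A b $ i $ j \<le> 1"
    "\<exists>i. normalized A b $ i $ j = 1"
proof -
  have fin: "finite (range (\<lambda>i. A $ i $ j / b $ i))" by simp
  obtain i0 where i0: "A $ i0 $ j \<noteq> 0" using col_nonzero by blast
  have "0 < A $ i0 $ j / b $ i0" using i0 nonneg b_pos
    by (metis divide_pos_pos order_le_less)
  also have "\<dots> \<le> col_scale A b j" unfolding col_scale_def using fin by (intro Max_ge) auto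
  finally show up: "0 < col_scale A b j" .
  have ge: "A $ i $ j / b $ i \<le> col_scale A b j" for i
    unfolding col_scale_def using fin by (intro Max_ge) auto
  show "0 \<le> normalized A b $ i $ j" unfolding normalized_def using nonneg b_pos up
    by (simp add: less_imp_le)
  have "normalized A b $ i $ j = (A $ i $ j / b $ i) / col_scale A b j"
    unfolding normalized_def by simp
  also have "\<dots> \<le> 1" using ge[of i] up by (metis divide_le_eq_1_pos)
  finally show "normalized A b $ i $ j \<le> 1" .
  have "col_scale A b j \<in> range (\<lambda>i. A $ i $ j / b $ i)"
    unfolding col_scale_def using fin by (intro Max_in) auto
  then obtain i1 where eq: "A $ i1 $ j / b $ i1 = col_scale A b j" by auto
  have "normalized A b $ i1 $ j = 1" unfolding normalized_def vec_lambda_beta eq using up by simp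
  then show "\<exists>i. normalized A b $ i $ j = 1" by blast
qed

lemma dom_sum:
  fixes A :: "real^'d^'n" and b :: "real^'n" and q :: "'n \<Rightarrow> 'd"
  assumes dom: "dominance A b"
    and M0: "\<forall>i j. 0 \<le> normalized A b $ i $ j"
    and inj: "inj q"
    and q1: "\<forall>i. normalized A b $ i $ (q i) = 1"
  shows "(\<Sum>i\<in>UNIV. normalized A b $ k $ (q i)) < 2"
proof -
  have c: "card (range q) = CARD('n)" using inj by (simp add: card_image)
  have "covers_perm (normalized A b) (range q)"
    unfolding covers_perm_def
  proof (intro exI conjI allI ballI)
    show "bij_betw q UNIV (range q)" using inj by (simp add: bij_betw_def)
  next
    fix i j assume "j \<in> range q"
    show "(if j = q i then 1 else 0) \<le> normalized A b $ i $ j"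
      using q1 M0 by auto
  qed
  with dom c have "(\<Sum>j\<in>range q. normalized A b $ k $ j) < 2"
    unfolding dominance_def by blast
  moreover have "(\<Sum>j\<in>range q. normalized A b $ k $ j) = (\<Sum>i\<in>UNIV. normalized A b $ k $ (q i))"
    using inj by (simp add: sum.reindex)
  ultimately show ?thesis by simp
qed

lemma sum_two_le:
  fixes f :: "'a::finite \<Rightarrow> real"
  assumes "\<forall>x. 0 \<le> f x" "a \<noteq> c"
  shows "f a + f c \<le> (\<Sum>x\<in>UNIV. f x)"
proof -
  have "(\<Sum>x\<in>{a,c}. f x) \<le> (\<Sum>x\<in>UNIV. f x)"
    using assms by (intro sum_mono2) auto
  then show ?thesis using assms by simp
qed

lemma col_unique:
  fixes A :: "real^'d^'n" and b :: "real^'n"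
  assumes dom: "dominance A b"
    and M0: "\<forall>i j. 0 \<le> normalized A b $ i $ j"
    and M1: "\<forall>i j. normalized A b $ i $ j \<le> 1"
    and h1: "normalized A b $ i $ j = 1" and h2: "normalized A b $ i' $ j = 1"
  shows "i = i'"
proof (rule ccontr)
  assume ne: "i \<noteq> i'"
  define M where "M = normalized A b"
  obtain S p0 where p0: "bij_betw p0 (UNIV::'n set) S"
    and cov: "\<forall>i. \<forall>j\<in>S. (if j = p0 i then 1 else 0) \<le> M $ i $ j"
  proof -
    obtain S0 where "covers_perm M S0" using dom unfolding dominance_def M_def by blast
    then show ?thesis using that unfolding covers_perm_def by blast
  qed
  have inj0: "inj p0" using p0 by (simp add: bij_betw_def)
  have p01: "\<forall>l. M $ l $ (p0 l) = 1"
  proof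
    fix l
    have "p0 l \<in> S" using p0 bij_betwE by blast
    then have "(if p0 l = p0 l then 1 else 0) \<le> M $ l $ (p0 l)" using cov by blast
    then have "1 \<le> M $ l $ (p0 l)" by simp
    then show "M $ l $ (p0 l) = 1" using M1 unfolding M_def by (meson antisym)
  qed
  have key: "\<And>q a c. inj q \<Longrightarrow> \<forall>l. M $ l $ (q l) = 1 \<Longrightarrow> a \<noteq> c \<Longrightarrow> M $ a $ (q c) = 1 \<Longrightarrow> False"
  proof -
    fix q a c assume iq: "inj (q::'n\<Rightarrow>'d)" and q1: "\<forall>l. M $ l $ (q l) = 1" and ac: "a \<noteq> c"
      and m: "M $ a $ (q c) = 1"
    have "(\<Sum>l\<in>UNIV. M $ a $ (q l)) < 2" using dom_sum[OF dom M0 iq] q1 unfolding M_def by blast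
    moreover have "M $ a $ (q a) + M $ a $ (q c) \<le> (\<Sum>l\<in>UNIV. M $ a $ (q l))"
      using sum_two_le[of "\<lambda>l. M $ a $ (q l)" a c] M0 ac unfolding M_def by blast
    ultimately show False using q1 m by simp
  qed
  show False
  proof (cases "j \<in> range p0")
    case True
    then obtain m where jm: "j = p0 m" by blast
    show False
    proof (cases "m = i")
      case True
      then have "i' \<noteq> m" using ne by simp
      then show False using key[OF inj0 p01, of i' m] h2 jm unfolding M_def by simp
    next
      case False
      then show False using key[OF inj0 p01, of i m] h1 jm unfolding M_def by simp
    qed
  next
    case False
    define q where "q = p0(i := j)"
    have iq: "inj q" unfolding q_def using inj0 False
      by (auto simp: inj_def)
    have q1: "\<forall>l. M $ l $ (q l) = 1" unfolding q_def using p01 h1 M_def by auto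
    show False using key[OF iq q1, of i' i] ne h2 unfolding q_def M_def by simp
  qed
qed

theorem lemma4p8:
  fixes A :: "real^'d^'n" and b :: "real^'n" and B :: "'d set"
  assumes nonneg: "\<forall>i j. 0 \<le> A $ i $ j"
    and col_nonzero: "\<forall>j. \<exists>i. A $ i $ j \<noteq> 0"
    and b_pos: "\<forall>i. 0 < b $ i"
    and dom: "dominance A b"
    and fb: "feasible_basis A b B"
  shows "covers_perm (normalized A b) B"
proof -
  define M where "M = normalized A b"
  note np = norm_props[OF nonneg col_nonzero b_pos]
  have M0: "\<forall>i j. 0 \<le> M $ i $ j" and M1: "\<forall>i j. M $ i $ j \<le> 1"
    and Mex: "\<forall>j. \<exists>i. M $ i $ j = 1" and upos: "\<forall>j. 0 < col_scale A b j"
    using np unfolding M_def by auto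
  define r where "r j = (SOME i. M $ i $ j = 1)" for j
  have r: "M $ (r j) $ j = 1" for j
  proof -
    obtain i where "M $ i $ j = 1" using Mex by blast
    then show ?thesis unfolding r_def by (rule someI)
  qed
  have M0': "\<forall>i j. 0 \<le> normalized A b $ i $ j" unfolding M_def[symmetric] by (rule M0)
  have M1': "\<forall>i j. normalized A b $ i $ j \<le> 1" unfolding M_def[symmetric] by (rule M1)
  have cu: "i = i'" if "M $ i $ j = 1" "M $ i' $ j = 1" for i i' j
    using col_unique[OF dom M0' M1', of i j i'] that unfolding M_def[symmetric] by blast
  have runi: "r j = i" if "M $ i $ j = 1" for i j
    using cu[OF r[of j] that] .
  obtain S0 where S0: "covers_perm M S0" using dom unfolding dominance_def M_def by blast
  obtain p0 S where p0: "bij_betw p0 (UNIV::'n set) S"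
    and cov: "\<forall>i. \<forall>j\<in>S. (if j = p0 i then 1 else 0) \<le> M $ i $ j"
    using S0 unfolding covers_perm_def by blast
  have p01: "M $ l $ (p0 l) = 1" for l
  proof -
    have pl: "p0 l \<in> S" using p0 bij_betwE by blast
    have "(if p0 l = p0 l then 1 else 0) \<le> M $ l $ (p0 l)" using cov pl by blast
    then have "1 \<le> M $ l $ (p0 l)" by simp
    moreover have "M $ l $ (p0 l) \<le> 1" using M1 by blast
    ultimately show "M $ l $ (p0 l) = 1" by (rule antisym[rotated])
  qed
  obtain e :: "'n \<Rightarrow> 'd" where e: "bij_betw e UNIV B"
    and inv: "invertible (\<chi> i k. A $ i $ (e k))"
    using fb unfolding feasible_basis_def by blast
  define C where "C = (\<chi> i k. A $ i $ (e k))"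
  obtain C' where CC': "C ** C' = mat 1" using inv unfolding invertible_def C_def by blast
  define z where "z = C' *v b"
  have Cz: "C *v z = b" unfolding z_def
    by (simp add: matrix_vector_mul_assoc CC' matrix_vector_mul_lid)
  define x :: "real^'d" where "x = (\<chi> j. if j \<in> B then z $ (inv_into UNIV e j) else 0)"
  have xB: "\<forall>j. j \<notin> B \<longrightarrow> x $ j = 0" unfolding x_def by simp
  have Ax: "A *v x = b"
  proof (rule vec_eq_iff[THEN iffD2], rule allI)
    fix i
    have "(A *v x) $ i = (\<Sum>j\<in>UNIV. A $ i $ j * x $ j)" by (simp add: matrix_vector_mult_def)
    also have "\<dots> = (\<Sum>j\<in>B. A $ i $ j * x $ j)"
      using xB by (intro sum.mono_neutral_right) auto
    also have "\<dots> = (\<Sum>k\<in>UNIV. A $ i $ (e k) * x $ (e k))"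
      using sum.reindex_bij_betw[OF e, of "\<lambda>j. A $ i $ j * x $ j"] by simp
    also have "\<dots> = (\<Sum>k\<in>UNIV. C $ i $ k * z $ k)"
    proof (intro sum.cong refl)
      fix k
      have "e k \<in> B" using e bij_betwE by blast
      moreover have "inv_into UNIV e (e k) = k" using e by (simp add: bij_betw_def)
      ultimately show "A $ i $ (e k) * x $ (e k) = C $ i $ k * z $ k"
        unfolding x_def C_def by simp
    qed
    also have "\<dots> = (C *v z) $ i" by (simp add: matrix_vector_mult_def)
    finally show "(A *v x) $ i = b $ i" using Cz by simp
  qed
  have x0: "\<forall>j. 0 \<le> x $ j" using fb xB Ax unfolding feasible_basis_def by blast
  define y where "y j = col_scale A b j * x $ j" for j
  have y0: "0 \<le> y j" for j unfolding y_def using upos x0 by (simp add: less_imp_le)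
  have yB: "j \<notin> B \<Longrightarrow> y j = 0" for j unfolding y_def using xB by simp
  have yeq: "(\<Sum>j\<in>UNIV. M $ i $ j * y j) = 1" for i
  proof -
    have tm: "M $ i $ j * y j = A $ i $ j * x $ j / b $ i" for j
    proof -
      have "col_scale A b j \<noteq> 0" "b $ i \<noteq> 0" using upos b_pos by (auto simp: less_imp_neq[symmetric])
      then show ?thesis unfolding M_def normalized_def y_def by (simp add: field_simps)
    qed
    have "(\<Sum>j\<in>UNIV. M $ i $ j * y j) = (\<Sum>j\<in>UNIV. A $ i $ j * x $ j) / b $ i"
      unfolding tm by (simp add: sum_divide_distrib)
    also have "\<dots> = (A *v x) $ i / b $ i" by (simp add: matrix_vector_mult_def)
    also have "\<dots> = 1" using Ax b_pos by (simp add: less_imp_neq[symmetric])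
    finally show ?thesis .
  qed
  have finB: "finite B" by simp
  have rowB: "(\<Sum>j\<in>B. M $ i $ j * y j) = 1" for i
  proof -
    have "(\<Sum>j\<in>B. M $ i $ j * y j) = (\<Sum>j\<in>UNIV. M $ i $ j * y j)"
      using yB by (intro sum.mono_neutral_left) auto
    then show ?thesis using yeq by simp
  qed
  have Ybound: "(\<Sum>j\<in>{j\<in>B. r j = i}. y j) \<le> 1" for i
  proof -
    have "(\<Sum>j\<in>{j\<in>B. r j = i}. y j) = (\<Sum>j\<in>{j\<in>B. r j = i}. M $ i $ j * y j)"
      using r by (intro sum.cong refl) auto
    also have "\<dots> \<le> (\<Sum>j\<in>B. M $ i $ j * y j)"
      using M0 y0 by (intro sum_mono2) auto
    finally show ?thesis using rowB by simp
  qed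
  have surj: "\<forall>k. \<exists>j\<in>B. r j = k"
  proof (rule ccontr)
    assume "\<not> (\<forall>k. \<exists>j\<in>B. r j = k)"
    then obtain k where nk: "\<forall>j\<in>B. r j \<noteq> k" by blast
    have exm: "\<exists>j. j \<in> B \<and> r j = i \<and> (\<forall>j'\<in>B. r j' = i \<longrightarrow> M $ k $ j' \<le> M $ k $ j)"
      if "i \<in> r ` B" for i
    proof -
      let ?F = "(\<lambda>j. M $ k $ j) ` {j\<in>B. r j = i}"
      have "finite ?F" "?F \<noteq> {}" using that by auto
      then have "Max ?F \<in> ?F" by (rule Max_in)
      then obtain j where j: "j \<in> B" "r j = i" "M $ k $ j = Max ?F" by auto
      moreover have "\<forall>j'\<in>B. r j' = i \<longrightarrow> M $ k $ j' \<le> Max ?F"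
        using \<open>finite ?F\<close> by auto
      ultimately show ?thesis by auto
    qed
    define jm where "jm i = (SOME j. j \<in> B \<and> r j = i \<and> (\<forall>j'\<in>B. r j' = i \<longrightarrow> M $ k $ j' \<le> M $ k $ j))" for i
    have jm: "jm i \<in> B" "r (jm i) = i" "\<forall>j'\<in>B. r j' = i \<longrightarrow> M $ k $ j' \<le> M $ k $ (jm i)"
      if "i \<in> r ` B" for i
      using someI_ex[OF exm[OF that]] unfolding jm_def by blast+
    define q where "q i = (if i \<in> r ` B then jm i else p0 i)" for i
    have q1: "\<forall>i. M $ i $ (q i) = 1"
    proof
      fix i
      show "M $ i $ (q i) = 1"
      proof (cases "i \<in> r ` B")
        case True
        then have "r (jm i) = i" by (rule jm(2))
        then show ?thesis using r[of "jm i"] True unfolding q_def by simp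
      next
        case False
        then show ?thesis using p01[of i] unfolding q_def by simp
      qed
    qed
    have iq: "inj q"
    proof (rule injI)
      fix a c assume "q a = q c"
      have "a = r (q a)" using runi[OF q1[rule_format, of a]] by simp
      also have "\<dots> = r (q c)" using \<open>q a = q c\<close> by simp
      also have "\<dots> = c" using runi[OF q1[rule_format, of c]] by simp
      finally show "a = c" .
    qed
    have q1': "\<forall>i. normalized A b $ i $ (q i) = 1" unfolding M_def[symmetric] by (rule q1)
    have lt2: "(\<Sum>i\<in>UNIV. M $ k $ (q i)) < 2"
      unfolding M_def by (rule dom_sum[OF dom M0' iq q1'])
    have kn: "k \<notin> r ` B" using nk by blast
    have "(\<Sum>i\<in>insert k (r ` B). M $ k $ (q i)) \<le> (\<Sum>i\<in>UNIV. M $ k $ (q i))"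
      using M0 by (intro sum_mono2) auto
    moreover have "(\<Sum>i\<in>insert k (r ` B). M $ k $ (q i)) = M $ k $ (q k) + (\<Sum>i\<in>r ` B. M $ k $ (jm i))"
    proof -
      have "(\<Sum>i\<in>insert k (r ` B). M $ k $ (q i)) = M $ k $ (q k) + (\<Sum>i\<in>r ` B. M $ k $ (q i))"
        using kn by (intro sum.insert) auto
      moreover have "(\<Sum>i\<in>r ` B. M $ k $ (q i)) = (\<Sum>i\<in>r ` B. M $ k $ (jm i))"
        by (intro sum.cong refl) (simp add: q_def)
      ultimately show ?thesis by simp
    qed
    ultimately have lt1: "(\<Sum>i\<in>r ` B. M $ k $ (jm i)) < 1" using lt2 q1 by simp
    have "1 = (\<Sum>j\<in>B. M $ k $ j * y j)" using rowB by simp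
    also have "\<dots> = (\<Sum>i\<in>r ` B. \<Sum>j\<in>{j\<in>B. r j = i}. M $ k $ j * y j)"
      by (rule sum.image_gen[OF finB])
    also have "\<dots> \<le> (\<Sum>i\<in>r ` B. \<Sum>j\<in>{j\<in>B. r j = i}. M $ k $ (jm i) * y j)"
    proof (intro sum_mono)
      fix i j assume i: "i \<in> r ` B" and j: "j \<in> {j\<in>B. r j = i}"
      then have "M $ k $ j \<le> M $ k $ (jm i)" using jm(3)[OF i] by auto
      then show "M $ k $ j * y j \<le> M $ k $ (jm i) * y j" using y0 by (simp add: mult_right_mono)
    qed
    also have "\<dots> = (\<Sum>i\<in>r ` B. M $ k $ (jm i) * (\<Sum>j\<in>{j\<in>B. r j = i}. y j))"
      by (simp add: sum_distrib_left)
    also have "\<dots> \<le> (\<Sum>i\<in>r ` B. M $ k $ (jm i))"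
    proof (intro sum_mono)
      fix i
      show "M $ k $ (jm i) * (\<Sum>j\<in>{j\<in>B. r j = i}. y j) \<le> M $ k $ (jm i)"
        using Ybound[of i] M0 by (simp add: mult_left_le)
    qed
    finally show False using lt1 by simp
  qed
  have rB: "r ` B = UNIV"
  proof (intro set_eqI iffI)
    fix k assume "k \<in> (UNIV::'n set)"
    obtain j where "j \<in> B" "r j = k" using surj by blast
    then show "k \<in> r ` B" by (metis image_eqI)
  qed simp
  have cB: "card B = CARD('n)" using fb unfolding feasible_basis_def by blast
  have injr: "inj_on r B"
  proof (rule eq_card_imp_inj_on[OF finB])
    show "card (r ` B) = card B" using rB cB by simp
  qed
  have bijr: "bij_betw r B UNIV" using injr rB by (simp add: bij_betw_def)
  define p where "p = the_inv_into B r"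
  have bp: "bij_betw p UNIV B" unfolding p_def by (rule bij_betw_the_inv_into[OF bijr])
  have rp: "r (p i) = i" for i unfolding p_def using injr rB f_the_inv_into_f by fastforce
  show ?thesis unfolding covers_perm_def M_def[symmetric]
  proof (intro exI conjI allI ballI)
    show "bij_betw p UNIV B" by (rule bp)
  next
    fix i j assume "j \<in> B"
    show "(if j = p i then 1 else 0) \<le> M $ i $ j"
      using r[of j] rp[of i] M0 by auto
  qed
qed

end
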